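(* Let $(X,d)$ be a complete metric space and let $T:X\to X$ be a mapping for which there exists $\beta\in[0,\tfrac23)$ such that $$d(Tx,T^2x)+d(T^2x,Ty)+d(Ty,Tx)\le \beta\,[\,d(x,Tx)+d(y,Ty)+d(Tx,T^2x)\,]$$ for all $x,y\in X$ such that $x$, $y$, $Tx$ are pairwise distinct (i.e. $T$ is a generalized orbital triangular Kannan contraction). Suppose that $T$ has no periodic points of prime period $2$. Then $T$ has a fixed point.
   Context: A point $x\in X$ is a periodic point of period $n$ of $T$ if $T^n x=x$; the least positive integer $n$ with $T^nx=x$ is its prime period. Thus "no periodic points of prime period $2$" means there is no $x\in X$ with $T^2x=x$ and $Tx\neq x$. *)

theory Defs
  imports "HOL-Analysis.Analysis"
begin

end

theory Submission
  imports Defs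
begin

lemma geom_cauchy:
  fixes x :: "nat \<Rightarrow> 'a::metric_space" and C q :: real
  assumes q: "0 \<le> q" "q < 1" and d: "\<And>n. dist (x n) (x (Suc n)) \<le> C * q ^ n"
  shows "Cauchy x"
proof -
  have C: "C \<ge> 0" using order_trans[OF zero_le_dist d[of 0]] by simp
  have B: "(1 - q) * dist (x m) (x (m + k)) \<le> C * q ^ m * (1 - q ^ k)" for m k
  proof (induction k)
    case 0 then show ?case by simp
  next
    case (Suc k)
    have "(1 - q) * dist (x m) (x (m + Suc k)) \<le>
        (1 - q) * (dist (x m) (x (m + k)) + dist (x (m + k)) (x (Suc (m + k))))"
      using q by (intro mult_left_mono) (simp_all add: dist_triangle)
    also have "\<dots> \<le> (1 - q) * (dist (x m) (x (m + k)) + C * q ^ (m + k))"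
      using q d[of "m+k"] by (intro mult_left_mono) simp_all
    also have "\<dots> \<le> C * q ^ m * (1 - q ^ k) + (1 - q) * C * q ^ (m + k)"
      using Suc by (simp add: algebra_simps)
    also have "\<dots> = C * q ^ m * (1 - q ^ Suc k)"
      by (simp add: power_add algebra_simps)
    finally show ?case .
  qed
  have B2: "dist (x m) (x (m + k)) \<le> C * q ^ m / (1 - q)" for m k
  proof -
    have "C * q ^ m * (1 - q ^ k) \<le> C * q ^ m"
      using C q by (simp add: mult_left_le zero_le_power)
    with B[of m k] have "(1 - q) * dist (x m) (x (m + k)) \<le> C * q ^ m" by linarith
    then show ?thesis using q by (simp add: pos_le_divide_eq mult.commute)
  qed
  show ?thesis
  proof (rule metric_CauchyI)
    fix e :: real assume e: "0 < e"
    have "(\<lambda>n. q ^ n) \<longlonglongrightarrow> 0" using q by (intro LIMSEQ_power_zero) simp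
    moreover have "0 < e * (1 - q) / (2 * C + 1)" using e q C by simp
    ultimately obtain M where M: "q ^ M < e * (1 - q) / (2 * C + 1)"
      using q by (metis (no_types, lifting) order_tendstoD(2) eventually_sequentially order_refl)
    have key: "2 * (C * q ^ M / (1 - q)) < e"
    proof -
      have "C * q ^ M \<le> (C + 1/2) * q ^ M" using q by (simp add: mult_right_mono)
      also have "\<dots> < (C + 1/2) * (e * (1 - q) / (2 * C + 1))"
        using M C by (intro mult_strict_left_mono) simp_all
      also have "\<dots> = e * (1 - q) / 2" using C by (simp add: field_simps)
      finally show ?thesis using q by (simp add: field_simps)
    qed
    show "\<exists>M. \<forall>m\<ge>M. \<forall>n\<ge>M. dist (x m) (x n) < e"
    proof (intro exI allI impI)
      fix m n assume mn: "M \<le> m" "M \<le> n"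
      have "dist (x m) (x n) \<le> dist (x M) (x m) + dist (x M) (x n)"
        by (rule dist_triangle3)
      also have "\<dots> \<le> 2 * (C * q ^ M / (1 - q))"
        using B2[of M "m - M"] B2[of M "n - M"] mn by simp
      finally show "dist (x m) (x n) < e" using key by linarith
    qed
  qed
qed

theorem theorem4p1:
  fixes T :: "'a::complete_space \<Rightarrow> 'a" and \<beta> :: real
  assumes beta: "0 \<le> \<beta>" "\<beta> < 2/3"
    and contr: "\<And>x y. x \<noteq> y \<Longrightarrow> y \<noteq> T x \<Longrightarrow> x \<noteq> T x \<Longrightarrow>
        dist (T x) (T (T x)) + dist (T (T x)) (T y) + dist (T y) (T x)
          \<le> \<beta> * (dist x (T x) + dist y (T y) + dist (T x) (T (T x)))"
    and no_period2: "\<not> (\<exists>x. (T ^^ 2) x = x \<and> T x \<noteq> x)"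
  shows "\<exists>x. T x = x"
proof (rule ccontr)
  assume "\<not> (\<exists>x. T x = x)"
  then have nofix: "\<And>x. T x \<noteq> x" by blast
  obtain x0 :: 'a where True by simp
  define x where "x n = (T ^^ n) x0" for n
  have xS: "x (Suc n) = T (x n)" for n by (simp add: x_def)
  have xadd: "x (i + j) = (T ^^ j) (x i)" for i j
    by (simp add: x_def add.commute[of i j] funpow_add)
  have ne1: "x (Suc n) \<noteq> x n" for n using nofix xS by metis
  have ne2: "x (Suc (Suc n)) \<noteq> x n" for n
  proof
    assume "x (Suc (Suc n)) = x n"
    then have "(T ^^ 2) (x n) = x n" by (simp add: xS numeral_2_eq_2)
    with no_period2 nofix show False by blast
  qed
  define P where "P n = dist (x n) (x (Suc n)) + dist (x (Suc n)) (x (Suc (Suc n)))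
      + dist (x (Suc (Suc n))) (x n)" for n
  define q where "q = 2 * \<beta> / (2 - \<beta>)"
  have q: "0 \<le> q" "q < 1" using beta by (simp_all add: q_def field_simps)
  have Prec: "P (Suc n) \<le> q * P n" for n
  proof -
    have c: "dist (x (Suc (Suc n))) (x (Suc (Suc (Suc n)))) + dist (x (Suc (Suc (Suc n)))) (x (Suc n))
        + dist (x (Suc n)) (x (Suc (Suc n)))
        \<le> \<beta> * (dist (x (Suc n)) (x (Suc (Suc n))) + dist (x n) (x (Suc n))
           + dist (x (Suc (Suc n))) (x (Suc (Suc (Suc n)))))"
      using contr[of "x (Suc n)" "x n"] ne1 ne2 by (metis xS)
    have e: "P (Suc n) = dist (x (Suc (Suc n))) (x (Suc (Suc (Suc n)))) + dist (x (Suc (Suc (Suc n)))) (x (Suc n))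
        + dist (x (Suc n)) (x (Suc (Suc n)))"
      by (simp add: P_def dist_commute)
    have t: "dist (x (Suc (Suc n))) (x (Suc (Suc (Suc n)))) \<le> P (Suc n) / 2"
      using dist_triangle[of "x (Suc (Suc n))" "x (Suc (Suc (Suc n)))" "x (Suc n)"]
      by (simp add: P_def dist_commute)
    have u: "dist (x (Suc n)) (x (Suc (Suc n))) + dist (x n) (x (Suc n)) \<le> P n"
      by (simp add: P_def)
    have "P (Suc n) \<le> \<beta> * (P n + P (Suc n) / 2)"
      using c e t u beta by (smt (verit) mult_left_mono)
    then have "(2 - \<beta>) * P (Suc n) \<le> 2 * \<beta> * P n" by (simp add: algebra_simps)
    then show ?thesis using beta by (simp add: q_def field_simps)
  qed
  have Pge: "P n \<ge> 0" for n by (simp add: P_def)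
  have Pq: "P n \<le> P 0 * q ^ n" for n
  proof (induction n)
    case 0 then show ?case by simp
  next
    case (Suc n)
    have "P (Suc n) \<le> q * P n" by (rule Prec)
    also have "\<dots> \<le> q * (P 0 * q ^ n)" using Suc q by (intro mult_left_mono) simp_all
    finally show ?case by (simp add: algebra_simps)
  qed
  have ad: "dist (x n) (x (Suc n)) \<le> P 0 * q ^ n" for n
    using Pq[of n] by (simp add: P_def) (smt (verit) zero_le_dist)
  have "Cauchy x" by (rule geom_cauchy[OF q ad])
  then obtain z where z: "x \<longlonglongrightarrow> z" using Cauchy_convergent_iff convergent_def by blast
  have a0: "(\<lambda>n. dist (x n) (x (Suc n))) \<longlonglongrightarrow> 0"
  proof -
    have "(\<lambda>n. P 0 * q ^ n) \<longlonglongrightarrow> P 0 * 0" using q by (intro tendsto_intros) simp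
    then have "(\<lambda>n. P 0 * q ^ n) \<longlonglongrightarrow> 0" by simp
    then show ?thesis
      by (rule Lim_null_comparison[rotated]) (simp add: ad)
  qed
  have distinct: "x n \<noteq> x m" if nm: "n < m" for n m
  proof
    assume eq: "x n = x m"
    define p where "p = m - n"
    have p: "p > 0" "m = n + p" using nm unfolding p_def by simp_all
    have per: "x (n + k * p) = x n" for k
    proof (induction k)
      case 0 then show ?case by simp
    next
      case (Suc k)
      have "x (n + Suc k * p) = (T ^^ p) (x (n + k * p))"
        using xadd[of "n + k * p" p] by (simp add: algebra_simps)
      also have "\<dots> = (T ^^ p) (x n)" using Suc by simp
      also have "\<dots> = x m" using xadd[of n p] p by simp
      finally show ?case using eq by simp
    qed
    have pos: "dist (x n) (x (Suc n)) > 0" using ne1[of n] by simp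
    from a0 pos obtain N where N: "\<And>j. j \<ge> N \<Longrightarrow> dist (x j) (x (Suc j)) < dist (x n) (x (Suc n))"
      by (metis (no_types, lifting) order_tendstoD(2) eventually_sequentially)
    have "N * 1 \<le> N * p" using p by (intro mult_le_mono2) simp
    then have "N \<le> n + N * p" by linarith
    from N[OF this] show False using per[of N] xS by (metis less_irrefl)
  qed
  have ev: "\<exists>N. \<forall>n\<ge>N. x n \<noteq> z"
  proof (cases "\<exists>n0. x n0 = z")
    case True
    then obtain n0 where "x n0 = z" by blast
    then show ?thesis using distinct by (metis Suc_le_eq)
  next
    case False then show ?thesis by blast
  qed
  then obtain N where N: "\<And>n. n \<ge> N \<Longrightarrow> x n \<noteq> z" by blast
  have ineq: "dist (x (Suc n)) (x (Suc (Suc n))) + dist (x (Suc (Suc n))) (T z) + dist (T z) (x (Suc n))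
      \<le> \<beta> * (dist (x n) (x (Suc n)) + dist z (T z) + dist (x (Suc n)) (x (Suc (Suc n))))"
    if "n \<ge> N" for n
    using contr[of "x n" z] N[of n] N[of "Suc n"] that ne1[of n] xS by (metis le_SucI)
  have z1: "(\<lambda>n. x (Suc n)) \<longlonglongrightarrow> z" using z by (rule LIMSEQ_Suc)
  have z2: "(\<lambda>n. x (Suc (Suc n))) \<longlonglongrightarrow> z" using z1 by (rule LIMSEQ_Suc)
  have "dist z z + dist z (T z) + dist (T z) z \<le> \<beta> * (dist z z + dist z (T z) + dist z z)"
  proof (rule LIMSEQ_le)
    show "(\<lambda>n. dist (x (Suc n)) (x (Suc (Suc n))) + dist (x (Suc (Suc n))) (T z) + dist (T z) (x (Suc n)))
      \<longlonglongrightarrow> dist z z + dist z (T z) + dist (T z) z"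
      by (intro tendsto_intros z1 z2)
    show "(\<lambda>n. \<beta> * (dist (x n) (x (Suc n)) + dist z (T z) + dist (x (Suc n)) (x (Suc (Suc n)))))
      \<longlonglongrightarrow> \<beta> * (dist z z + dist z (T z) + dist z z)"
      by (intro tendsto_intros z z1 z2)
    show "\<exists>N. \<forall>n\<ge>N. dist (x (Suc n)) (x (Suc (Suc n))) + dist (x (Suc (Suc n))) (T z) + dist (T z) (x (Suc n))
      \<le> \<beta> * (dist (x n) (x (Suc n)) + dist z (T z) + dist (x (Suc n)) (x (Suc (Suc n))))"
      using ineq by blast
  qed
  then have "2 * dist z (T z) \<le> \<beta> * dist z (T z)" by (simp add: dist_commute)
  then have "dist z (T z) = 0" using beta zero_le_dist[of z "T z"] mult_right_mono[of \<beta> "2/3" "dist z (T z)"] by linarith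
  then show False using nofix[of z] by simp
qed

end
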